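(* Let $C_{\vec B}$ be a Cantor set with scale factor $N$ and digit set $D$. Let $D_1,\dots,D_k$ be all the $2$-element subsets of $\{0,1,\dots,N-1\}$, and let $\vec B_1,\dots,\vec B_k$ be the associated binary digit vectors of length $N$. Then for any choice of irrational numbers $x_i\in C_{\vec B_i}$, $i=1,\dots,k$, we have $$D=\bigcup_{i\in A}D_i,\qquad\text{where } A=\{i : F_{\vec B}(x_i)\notin\mathbb Q\}.$$ In particular $D$ is uniquely determined by $\{(x_i,F_{\vec B}(x_i))\}_{i=1}^k$.
   Context: A Cantor set is specified by an integer scale factor $N\ge3$ and a digit set $D\subset\{0,\dots,N-1\}$ with $2\le|D|\le N-1$; equivalently by the binary digit vector $\vec B=(b_0,\dots,b_{N-1})$ with $b_i=1$ iff $i\in D$, $\|\vec B\|=|D|$. With $\phi_d(x)=(x+d)/N$ for $d\in D$, $C_{\vec B}\subset[0,1]$ is the unique nonempty compact set with $C_{\vec B}=\bigcup_{d\in D}\phi_d(C_{\vec B})$, and $\mu_{\vec B}$ is the unique Borel probability measure with $\mu_{\vec B}=\frac{1}{\|\vec B\|}\sum_{d\in D}\mu_{\vec B}\circ\phi_d^{-1}$. The CDF is $F_{\vec B}(x)=\mu_{\vec B}([0,x])$, $x\in[0,1]$. *)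

theory Defs
  imports "HOL-Probability.Probability"
begin

text \<open>Cantor set with scale factor N and digit set D (the digit set D is the
  set of indices i with b_i = 1 in the binary digit vector B).\<close>

definition cantor_map :: "nat \<Rightarrow> nat \<Rightarrow> real \<Rightarrow> real" where
  "cantor_map N d x = (x + real d) / real N"

definition cantor_set :: "nat \<Rightarrow> nat set \<Rightarrow> real set" where
  "cantor_set N D = (THE C. C \<noteq> {} \<and> compact C \<and> C = (\<Union>d\<in>D. cantor_map N d ` C))"

definition cantor_measure :: "nat \<Rightarrow> nat set \<Rightarrow> real measure" where
  "cantor_measure N D = (THE \<mu>. prob_space \<mu> \<and> sets \<mu> = sets borel \<and>
     (\<forall>A\<in>sets borel. measure \<mu> A =
        (\<Sum>d\<in>D. measure \<mu> (cantor_map N d -` A)) / real (card D)))"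

definition cantor_cdf :: "nat \<Rightarrow> nat set \<Rightarrow> real \<Rightarrow> real" where
  "cantor_cdf N D x = measure (cantor_measure N D) {0..x}"

definition valid_digits :: "nat \<Rightarrow> nat set \<Rightarrow> bool" where
  "valid_digits N D \<longleftrightarrow> 3 \<le> N \<and> D \<subseteq> {..<N} \<and> 2 \<le> card D \<and> card D \<le> N - 1"

end

theory Submission
  imports Defs
begin
definition Tset :: "nat \<Rightarrow> nat set \<Rightarrow> real set \<Rightarrow> real set" where
  "Tset N S A = (\<Union>d\<in>S. cantor_map N d ` A)"

lemma cantor_map_cont: "continuous_on A (cantor_map N d)"
proof -
  have "cantor_map N d = (\<lambda>x. (1 / real N) * x + real d / real N)"
    by (auto simp: cantor_map_def add_divide_distrib)
  have "continuous_on A (\<lambda>x. (1 / real N) * x + real d / real N)" by (intro continuous_intros)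
  then show ?thesis using \<open>cantor_map N d = _\<close> by simp
qed

lemma Tset_compact: "finite S \<Longrightarrow> compact A \<Longrightarrow> compact (Tset N S A)"
  unfolding Tset_def by (intro compact_UN compact_continuous_image cantor_map_cont) auto

lemma Tset_mono: "A \<subseteq> B \<Longrightarrow> Tset N S A \<subseteq> Tset N S B"
  unfolding Tset_def by auto

lemma Tset_unit: assumes "N \<ge> 2" "S \<subseteq> {..<N}" shows "Tset N S {0..1} \<subseteq> {0..1}"
proof
  fix x assume "x \<in> Tset N S {0..1}"
  then obtain d y where d: "d \<in> S" "y \<in> {0..1}" "x = (y + real d) / real N"
    unfolding Tset_def cantor_map_def by auto
  have "d + 1 \<le> N" using d assms by auto
  hence "real d + 1 \<le> real N" by linarith
  have "y + real d \<le> real N" using d \<open>real d + 1 \<le> real N\<close> by auto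
  then have "x \<le> 1" using d assms by (simp add: pos_divide_le_eq)
  moreover have "0 \<le> x" using d by simp
  ultimately show "x \<in> {0..1}" by simp
qed

definition attr :: "nat \<Rightarrow> nat set \<Rightarrow> real set \<Rightarrow> bool" where
  "attr N S C \<longleftrightarrow> C \<noteq> {} \<and> compact C \<and> C = Tset N S C"

lemma attrD: assumes "attr N S C"
  shows "C \<noteq> {}" "compact C" "C \<subseteq> Tset N S C" "Tset N S C \<subseteq> C"
  using assms unfolding attr_def by blast+

lemma attr_bounds:
  assumes "N \<ge> 2" "S \<subseteq> {..<N}" "attr N S C" shows "C \<subseteq> {0..1}"
proof -
  have C: "C \<noteq> {}" "compact C" "C \<subseteq> Tset N S C" using attrD[OF assms(3)] by auto
  obtain u where u: "u \<in> C" "\<forall>y\<in>C. y \<le> u" using compact_attains_sup[OF C(2,1)] by auto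
  obtain l where l: "l \<in> C" "\<forall>y\<in>C. l \<le> y" using compact_attains_inf[OF C(2,1)] by auto
  from u(1) C(3) have "u \<in> Tset N S C" by blast
  then obtain d c where dc: "d \<in> S" "c \<in> C" "u = (c + real d) / real N"
    unfolding Tset_def cantor_map_def by auto
  have "d + 1 \<le> N" using dc assms by auto
  hence "real d + 1 \<le> real N" by linarith
  moreover have "c \<le> u" using u dc by auto
  moreover have "u * real N = c + real d" using dc assms by (simp add: field_simps)
  ultimately have "u * real N \<le> u + real N - 1" by linarith
  hence "(u - 1) * (real N - 1) \<le> 0" by (simp add: algebra_simps)
  hence u1: "u \<le> 1" using assms by (simp add: mult_le_0_iff)
  from l(1) C(3) have "l \<in> Tset N S C" by blast
  then obtain d' c' where dc': "d' \<in> S" "c' \<in> C" "l = (c' + real d') / real N"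
    unfolding Tset_def cantor_map_def by auto
  have "l \<le> c'" using l dc' by auto
  moreover have "l * real N = c' + real d'" using dc' assms by (simp add: field_simps)
  ultimately have "l * real N \<ge> l" by linarith
  hence "l * (real N - 1) \<ge> 0" by (simp add: algebra_simps)
  hence l0: "l \<ge> 0" using assms by (simp add: zero_le_mult_iff)
  show ?thesis using u l u1 l0 by force
qed

lemma attr_approx:
  assumes "N \<ge> 2" "S \<subseteq> {..<N}" "attr N S C1" "attr N S C2"
  shows "\<forall>x\<in>C1. \<exists>z\<in>C2. \<bar>x - z\<bar> \<le> 1 / real N ^ n"
proof (induction n)
  case 0
  have "C2 \<noteq> {}" using attrD[OF assms(4)] by auto
  then obtain z where "z \<in> C2" by auto
  then show ?case using attr_bounds[OF assms(1,2,3)] attr_bounds[OF assms(1,2,4)] by force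
next
  case (Suc n)
  show ?case
  proof
    fix x assume "x \<in> C1"
    then have "x \<in> Tset N S C1" using attrD(3)[OF assms(3)] by blast
    then obtain d y where dy: "d \<in> S" "y \<in> C1" "x = (y + real d) / real N"
      unfolding Tset_def cantor_map_def by blast
    obtain z where z: "z \<in> C2" "\<bar>y - z\<bar> \<le> 1 / real N ^ n" using Suc dy by auto
    have "(z + real d) / real N \<in> Tset N S C2" using z dy unfolding Tset_def cantor_map_def by auto
    hence zz: "(z + real d) / real N \<in> C2" using attrD(4)[OF assms(4)] by blast
    have "\<bar>x - (z + real d) / real N\<bar> = \<bar>y - z\<bar> / real N" using dy assms
      by (simp add: field_simps abs_divide[symmetric] )
    also have "\<dots> \<le> (1 / real N ^ n) / real N" using z assms by (intro divide_right_mono) auto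
    also have "\<dots> = 1 / real N ^ Suc n" by simp
    finally show "\<exists>z\<in>C2. \<bar>x - z\<bar> \<le> 1 / real N ^ Suc n" using zz by blast
  qed
qed

lemma attr_subset:
  assumes "N \<ge> 2" "S \<subseteq> {..<N}" "attr N S C1" "attr N S C2"
  shows "C1 \<subseteq> C2"
proof
  fix x assume x: "x \<in> C1"
  have cl: "closed C2" using attrD(2)[OF assms(4)] by (auto intro: compact_imp_closed)
  have "\<forall>e>0. \<exists>y\<in>C2. dist y x < e"
  proof (intro allI impI)
    fix e :: real assume e: "e > 0"
    obtain n where n: "(1 / real N) ^ n < e" using real_arch_pow_inv[OF e, of "1/real N"] assms by auto
    obtain z where z: "z \<in> C2" "\<bar>x - z\<bar> \<le> 1 / real N ^ n" using attr_approx[OF assms] x by blast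
    have "dist z x < e" using z n by (simp add: dist_real_def power_one_over abs_minus_commute)
    then show "\<exists>y\<in>C2. dist y x < e" using z by blast
  qed
  then show "x \<in> C2" using closed_approachable[OF cl] by blast
qed

lemma attr_exists:
  assumes "N \<ge> 2" "S \<subseteq> {..<N}" "S \<noteq> {}"
  shows "\<exists>C. attr N S C"
proof -
  have fin: "finite S" using assms(2) finite_subset by blast
  define A where "A n = (Tset N S ^^ n) {0..1}" for n
  have Ac: "compact (A n)" for n
    by (induction n) (auto simp: A_def intro!: Tset_compact fin)
  have Ane: "A n \<noteq> {}" for n
  proof (induction n)
    case 0 then show ?case by (simp add: A_def)
  next
    case (Suc n) then show ?case using assms(3) by (auto simp: A_def Tset_def)
  qed
  have Asuc: "A (Suc n) \<subseteq> A n" for n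
  proof (induction n)
    case 0 then show ?case using Tset_unit[OF assms(1,2)] by (simp add: A_def)
  next
    case (Suc n) then show ?case by (simp add: A_def Tset_mono)
  qed
  have Amono: "m \<le> n \<Longrightarrow> A n \<subseteq> A m" for m n
    by (induction n rule: dec_induct) (use Asuc in auto)
  define K where "K = \<Inter>(range A)"
  have Kne: "K \<noteq> {}" unfolding K_def by (rule compact_nest[OF Ac Ane Amono])
  have Kc: "compact K" unfolding K_def by (rule compact_Inter) (use Ac in auto)
  have "Tset N S K \<subseteq> K"
  proof -
    have "Tset N S K \<subseteq> A n" for n
    proof -
      have "Tset N S K \<subseteq> Tset N S (A n)" unfolding K_def by (rule Tset_mono) auto
      also have "\<dots> = A (Suc n)" by (simp add: A_def)
      also have "\<dots> \<subseteq> A n" by (rule Asuc)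
      finally show ?thesis .
    qed
    then show ?thesis unfolding K_def by auto
  qed
  moreover have "K \<subseteq> Tset N S K"
  proof
    fix x assume x: "x \<in> K"
    show "x \<in> Tset N S K"
    proof (rule ccontr)
      assume nx: "x \<notin> Tset N S K"
      have "\<forall>d\<in>S. \<exists>n. real N * x - real d \<notin> A n"
      proof
        fix d assume d: "d \<in> S"
        have "cantor_map N d (real N * x - real d) = x" using assms by (simp add: cantor_map_def)
        hence "real N * x - real d \<notin> K" using nx d unfolding Tset_def by force
        then show "\<exists>n. real N * x - real d \<notin> A n" unfolding K_def by auto
      qed
      then obtain f where f: "\<And>d. d \<in> S \<Longrightarrow> real N * x - real d \<notin> A (f d)" by metis
      define n where "n = Max (f ` S)"
      have notin: "real N * x - real d \<notin> A n" if "d \<in> S" for d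
      proof
        assume a: "real N * x - real d \<in> A n"
        have "f d \<le> n" unfolding n_def using that fin by simp
        then have "A n \<subseteq> A (f d)" by (rule Amono)
        then show False using a f[OF that] by blast
      qed
      have "x \<in> A (Suc n)" using x unfolding K_def by blast
      then have "x \<in> Tset N S (A n)" by (simp add: A_def)
      then obtain d y where dy: "d \<in> S" "y \<in> A n" "x = cantor_map N d y"
        unfolding Tset_def by blast
      have "real N * cantor_map N d y - real d = y" using assms by (simp add: cantor_map_def)
      then have "real N * x - real d \<in> A n" using dy by simp
      then show False using notin dy(1) by blast
    qed
  qed
  ultimately have "K = Tset N S K" by (intro subset_antisym)
  then have "attr N S K" using Kne Kc unfolding attr_def by (intro conjI)
  then show ?thesis by (rule exI)
qed

lemma cantor_set_attr:
  assumes "N \<ge> 2" "S \<subseteq> {..<N}" "S \<noteq> {}"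
  shows "attr N S (cantor_set N S)"
proof -
  obtain C0 where C0: "attr N S C0" using attr_exists[OF assms] by blast
  have "\<exists>!C. attr N S C"
  proof (rule ex1I[of _ C0])
    show "attr N S C0" by (rule C0)
    fix C assume C: "attr N S C"
    have "C \<subseteq> C0" by (rule attr_subset[OF assms(1,2) C C0])
    moreover have "C0 \<subseteq> C" by (rule attr_subset[OF assms(1,2) C0 C])
    ultimately show "C = C0" by (rule subset_antisym)
  qed
  then have "attr N S (THE C. attr N S C)" by (rule theI')
  moreover have "(THE C. attr N S C) = cantor_set N S"
    unfolding cantor_set_def attr_def Tset_def by simp
  ultimately show ?thesis by simp
qed

lemma cantor_set_step:
  assumes "N \<ge> 2" "S \<subseteq> {..<N}" "S \<noteq> {}" "x \<in> cantor_set N S"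
  shows "0 \<le> x \<and> x \<le> 1 \<and> (\<exists>d\<in>S. \<exists>y\<in>cantor_set N S. x = (y + real d) / real N)"
proof -
  have a: "attr N S (cantor_set N S)" by (rule cantor_set_attr[OF assms(1-3)])
  have "x \<in> Tset N S (cantor_set N S)" using attrD(3)[OF a] assms(4) by blast
  then obtain d y where "d \<in> S" "y \<in> cantor_set N S" "x = cantor_map N d y"
    unfolding Tset_def by blast
  then have "\<exists>d\<in>S. \<exists>y\<in>cantor_set N S. x = (y + real d) / real N"
    unfolding cantor_map_def by blast
  moreover have "x \<in> {0..1}" using attr_bounds[OF assms(1,2) a] assms(4) by blast
  ultimately show ?thesis by simp
qed

definition Xterm :: "nat \<Rightarrow> nat stream \<Rightarrow> nat \<Rightarrow> real" where
  "Xterm N \<omega> k = real (min (\<omega> !! k) (N - 1)) / real N ^ Suc k"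

definition Xf :: "nat \<Rightarrow> nat stream \<Rightarrow> real" where
  "Xf N \<omega> = (\<Sum>k. Xterm N \<omega> k)"

definition Sp :: "nat set \<Rightarrow> nat stream measure" where
  "Sp D = stream_space (measure_pmf (pmf_of_set D))"

definition mu0 :: "nat \<Rightarrow> nat set \<Rightarrow> real measure" where
  "mu0 N D = distr (Sp D) borel (Xf N)"

lemma Xterm_bound: "N \<ge> 2 \<Longrightarrow> 0 \<le> Xterm N \<omega> k \<and> Xterm N \<omega> k \<le> (real N - 1) / real N * (1 / real N) ^ k"
proof -
  assume N: "N \<ge> 2"
  have "real (min (\<omega> !! k) (N - 1)) \<le> real N - 1" using N by (simp add: of_nat_diff)
  then have "Xterm N \<omega> k \<le> (real N - 1) / real N ^ Suc k"
    unfolding Xterm_def using N by (intro divide_right_mono) auto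
  also have "\<dots> = (real N - 1) / real N * (1 / real N) ^ k" by (simp add: power_one_over field_simps)
  finally show ?thesis unfolding Xterm_def by simp
qed

lemma geom_sum: assumes "N \<ge> 2"
  shows "(\<lambda>k. (real N - 1) / real N * (1 / real N) ^ k) sums 1"
proof -
  have "(\<lambda>k. (1 / real N) ^ k) sums (1 / (1 - 1 / real N))" using assms by (intro geometric_sums) auto
  then have "(\<lambda>k. (real N - 1) / real N * (1 / real N) ^ k) sums ((real N - 1) / real N * (1 / (1 - 1 / real N)))"
    by (rule sums_mult)
  moreover have e: "(real N - 1) / real N * (1 / (1 - 1 / real N)) = 1" using assms by (simp add: field_simps)
  ultimately show ?thesis by metis
qed

lemma Xterm_summable: "N \<ge> 2 \<Longrightarrow> summable (Xterm N \<omega>)"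
  by (rule summable_comparison_test'[where g="\<lambda>k. (real N - 1) / real N * (1 / real N) ^ k" and N=0])
     (use Xterm_bound geom_sum in \<open>auto simp: sums_iff\<close>)

lemma Xf_range: assumes "N \<ge> 2" shows "0 \<le> Xf N \<omega> \<and> Xf N \<omega> \<le> 1"
proof
  show "0 \<le> Xf N \<omega>" unfolding Xf_def using Xterm_summable[OF assms] Xterm_bound[OF assms]
    by (intro suminf_nonneg) auto
  have "Xf N \<omega> \<le> (\<Sum>k. (real N - 1) / real N * (1 / real N) ^ k)" unfolding Xf_def
    using Xterm_summable[OF assms] Xterm_bound[OF assms] geom_sum[OF assms]
    by (intro suminf_le) (auto simp: sums_iff)
  also have "\<dots> = 1" using geom_sum[OF assms] by (simp add: sums_iff)
  finally show "Xf N \<omega> \<le> 1" .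
qed

lemma Xf_cons: assumes "N \<ge> 2" shows "Xf N (x ## \<omega>) = (real (min x (N - 1)) + Xf N \<omega>) / real N"
proof -
  have s: "summable (Xterm N (x ## \<omega>))" by (rule Xterm_summable[OF assms])
  have "(\<Sum>k. Xterm N (x ## \<omega>) (Suc k)) = suminf (Xterm N (x ## \<omega>)) - Xterm N (x ## \<omega>) 0"
    by (rule suminf_split_head[OF s])
  moreover have "(\<lambda>k. Xterm N (x ## \<omega>) (Suc k)) = (\<lambda>k. Xterm N \<omega> k / real N)"
    by (auto simp: Xterm_def)
  moreover have "(\<Sum>k. Xterm N \<omega> k / real N) = Xf N \<omega> / real N"
    unfolding Xf_def by (rule suminf_divide[OF Xterm_summable[OF assms]])
  moreover have "Xterm N (x ## \<omega>) 0 = real (min x (N - 1)) / real N" by (simp add: Xterm_def)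
  ultimately have "Xf N (x ## \<omega>) = real (min x (N - 1)) / real N + Xf N \<omega> / real N"
    unfolding Xf_def by simp
  then show ?thesis by (simp add: add_divide_distrib)
qed

lemma Xf_measurable[measurable]: "Xf N \<in> borel_measurable (stream_space (measure_pmf p))"
  unfolding Xf_def Xterm_def by measurable

lemma prob_Sp: "finite D \<Longrightarrow> D \<noteq> {} \<Longrightarrow> prob_space (Sp D)"
  unfolding Sp_def by (rule prob_space.prob_space_stream_space) (rule prob_space_measure_pmf)

lemma mu0_prob: "finite D \<Longrightarrow> D \<noteq> {} \<Longrightarrow> prob_space (mu0 N D)"
  unfolding mu0_def by (rule prob_space.prob_space_distr[OF prob_Sp]) (auto simp: Sp_def)

lemma mu0_sets: "sets (mu0 N D) = sets borel"
  unfolding mu0_def by simp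

lemma cantor_map_measurable[measurable]: "cantor_map N d \<in> borel_measurable borel"
  unfolding cantor_map_def by measurable

lemma mu0_emeasure: "A \<in> sets borel \<Longrightarrow> emeasure (mu0 N D) A = (\<integral>\<^sup>+\<omega>. indicator A (Xf N \<omega>) \<partial>Sp D)"
proof -
  assume A: "A \<in> sets borel"
  have "emeasure (mu0 N D) A = (\<integral>\<^sup>+x. indicator A x \<partial>mu0 N D)"
    using A by (simp add: mu0_sets)
  also have "\<dots> = (\<integral>\<^sup>+\<omega>. indicator A (Xf N \<omega>) \<partial>Sp D)"
    unfolding mu0_def by (rule nn_integral_distr) (use A in \<open>auto simp: Sp_def\<close>)
  finally show ?thesis .
qed

lemma mu0_eq_enn:
  assumes N: "N \<ge> 2" and D: "D \<subseteq> {..<N}" "D \<noteq> {}" and A: "A \<in> sets borel"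
  shows "emeasure (mu0 N D) A = (\<Sum>d\<in>D. emeasure (mu0 N D) (cantor_map N d -` A)) / of_nat (card D)"
proof -
  have fin: "finite D" using D finite_subset by blast
  have "emeasure (mu0 N D) A = (\<integral>\<^sup>+\<omega>. indicator A (Xf N \<omega>) \<partial>Sp D)" by (rule mu0_emeasure[OF A])
  also have "\<dots> = (\<integral>\<^sup>+x. (\<integral>\<^sup>+\<omega>. indicator A (Xf N (x ## \<omega>)) \<partial>Sp D) \<partial>measure_pmf (pmf_of_set D))"
    unfolding Sp_def by (rule prob_space.nn_integral_stream_space[OF prob_space_measure_pmf]) (use A in measurable)
  also have "\<dots> = (\<Sum>x\<in>D. (\<integral>\<^sup>+\<omega>. indicator A (Xf N (x ## \<omega>)) \<partial>Sp D)) / of_nat (card D)"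
    using fin D(2) by (simp add: nn_integral_pmf_of_set)
  also have "(\<Sum>x\<in>D. (\<integral>\<^sup>+\<omega>. indicator A (Xf N (x ## \<omega>)) \<partial>Sp D)) =
      (\<Sum>d\<in>D. emeasure (mu0 N D) (cantor_map N d -` A))"
  proof (rule sum.cong[OF refl])
    fix d assume d: "d \<in> D"
    then have "min d (N - 1) = d" using D by auto
    then have "\<And>\<omega>. indicator A (Xf N (d ## \<omega>)) = (indicator (cantor_map N d -` A) (Xf N \<omega>) :: ennreal)"
      using N by (simp add: Xf_cons cantor_map_def indicator_def add.commute)
    then have "(\<integral>\<^sup>+\<omega>. indicator A (Xf N (d ## \<omega>)) \<partial>Sp D) = (\<integral>\<^sup>+\<omega>. indicator (cantor_map N d -` A) (Xf N \<omega>) \<partial>Sp D)"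
      by simp
    also have "\<dots> = emeasure (mu0 N D) (cantor_map N d -` A)"
    proof -
      have "cantor_map N d -` A \<in> sets borel"
        using measurable_sets[OF cantor_map_measurable A] by simp
      then show ?thesis by (rule mu0_emeasure[symmetric])
    qed
    finally show "(\<integral>\<^sup>+\<omega>. indicator A (Xf N (d ## \<omega>)) \<partial>Sp D) = emeasure (mu0 N D) (cantor_map N d -` A)" .
  qed
  finally show ?thesis .
qed

lemma mu0_eq:
  assumes N: "N \<ge> 2" and D: "D \<subseteq> {..<N}" "D \<noteq> {}" and A: "A \<in> sets borel"
  shows "measure (mu0 N D) A = (\<Sum>d\<in>D. measure (mu0 N D) (cantor_map N d -` A)) / real (card D)"
proof -
  have fin: "finite D" using D finite_subset by blast
  interpret M: prob_space "mu0 N D" by (rule mu0_prob[OF fin D(2)])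
  have cpos: "real (card D) > 0" using fin D(2) by (simp add: card_gt_0_iff)
  have "ennreal (measure (mu0 N D) A) = (\<Sum>d\<in>D. ennreal (measure (mu0 N D) (cantor_map N d -` A))) / of_nat (card D)"
    using mu0_eq_enn[OF assms] by (simp add: M.emeasure_eq_measure)
  also have "\<dots> = ennreal ((\<Sum>d\<in>D. measure (mu0 N D) (cantor_map N d -` A)) / real (card D))"
    using cpos by (simp add: ennreal_of_nat_eq_real_of_nat divide_ennreal sum_nonneg)
  finally show ?thesis by (simp add: sum_nonneg divide_nonneg_nonneg)
qed

definition Tm :: "nat \<Rightarrow> real \<Rightarrow> real" where
  "Tm N y = real N * y - of_int \<lfloor>real N * y\<rfloor>"
definition dg :: "nat \<Rightarrow> real \<Rightarrow> nat" where
  "dg N y = nat \<lfloor>real N * y\<rfloor>"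

lemma Tm_range: "0 \<le> Tm N y \<and> Tm N y < 1"
  unfolding Tm_def by linarith

lemma Tm_dg: "0 \<le> y \<Longrightarrow> Tm N y = real N * y - real (dg N y)"
  unfolding Tm_def dg_def by simp

lemma Tm_iter_int: "\<exists>z::int. (Tm N ^^ i) x = real N ^ i * x - of_int z"
proof (induction i)
  case 0 then show ?case by (intro exI[of _ 0]) simp
next
  case (Suc i)
  then obtain z where z: "(Tm N ^^ i) x = real N ^ i * x - of_int z" by blast
  have "(Tm N ^^ Suc i) x = real N * (real N ^ i * x - of_int z) - of_int \<lfloor>real N * (Tm N ^^ i) x\<rfloor>"
    using z by (simp add: Tm_def)
  also have "\<dots> = real N ^ Suc i * x - of_int (int N * z + \<lfloor>real N * (Tm N ^^ i) x\<rfloor>)"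
    by (simp add: algebra_simps)
  finally show ?case by blast
qed

lemma Tm_iter_range: "0 \<le> x \<Longrightarrow> x \<le> 1 \<Longrightarrow> 0 \<le> (Tm N ^^ i) x \<and> (Tm N ^^ i) x \<le> 1"
proof (cases i)
  case (Suc n)
  have "(Tm N ^^ i) x = Tm N ((Tm N ^^ n) x)" using Suc by simp
  then show ?thesis using Tm_range[of N "(Tm N ^^ n) x"] by simp
qed simp

lemma same_digits_rat:
  assumes N: "N \<ge> 2" and x: "0 \<le> x" "x \<le> 1" and jk: "j < k"
    and dig: "\<And>i. dg N ((Tm N ^^ (j + i)) x) = dg N ((Tm N ^^ (k + i)) x)"
  shows "x \<in> \<rat>"
proof -
  define xs where "xs i = (Tm N ^^ i) x" for i
  have xr: "0 \<le> xs i \<and> xs i \<le> 1" for i unfolding xs_def using Tm_iter_range[OF x] by blast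
  have xsS: "xs (Suc i) = real N * xs i - real (dg N (xs i))" for i
    unfolding xs_def using Tm_dg xr[of i] by (simp add: xs_def)
  define e where "e i = xs (j + i) - xs (k + i)" for i
  have eS: "e (Suc i) = real N * e i" for i
    unfolding e_def using xsS[of "j+i"] xsS[of "k+i"] dig[of i] by (simp add: xs_def algebra_simps)
  have ep: "e i = real N ^ i * e 0" for i
    by (induction i) (simp_all add: eS)
  have eb: "\<bar>e i\<bar> \<le> 1" for i unfolding e_def using xr[of "j+i"] xr[of "k+i"] by auto
  have e0: "e 0 = 0"
  proof (rule ccontr)
    assume ne: "e 0 \<noteq> 0"
    then have pos: "\<bar>e 0\<bar> > 0" by simp
    obtain i where i: "(1 / real N) ^ i < \<bar>e 0\<bar>" using real_arch_pow_inv[OF pos, of "1 / real N"] N by auto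
    have "\<bar>e i\<bar> = real N ^ i * \<bar>e 0\<bar>" using ep[of i] by (simp add: abs_mult)
    also have "\<dots> > real N ^ i * (1 / real N) ^ i" using i N by (intro mult_strict_left_mono) auto
    also have "real N ^ i * (1 / real N) ^ i = 1" using N by (simp add: power_one_over)
    finally show False using eb[of i] by simp
  qed
  then have eq: "xs j = xs k" unfolding e_def by simp
  obtain z1 where z1: "xs j = real N ^ j * x - of_int z1" unfolding xs_def using Tm_iter_int by blast
  obtain z2 where z2: "xs k = real N ^ k * x - of_int z2" unfolding xs_def using Tm_iter_int by blast
  have "real N ^ j < real N ^ k" using N jk by (intro power_strict_increasing) auto
  then have ne: "real N ^ k - real N ^ j \<noteq> 0" by simp
  have "(real N ^ k - real N ^ j) * x = of_int z2 - of_int z1" using eq z1 z2 by (simp add: algebra_simps)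
  then have "x = (of_int z2 - of_int z1) / (real N ^ k - real N ^ j)" using ne by (simp add: field_simps)
  also have "\<dots> \<in> \<rat>" by (intro Rats_divide Rats_diff Rats_of_int Rats_power Rats_of_nat)
  finally show ?thesis .
qed

lemma Tm_irrat: assumes "N \<ge> 1" "y \<notin> \<rat>" shows "Tm N y \<notin> \<rat>"
proof
  assume "Tm N y \<in> \<rat>"
  then have "(Tm N y + of_int \<lfloor>real N * y\<rfloor>) / real N \<in> \<rat>"
    by (intro Rats_divide Rats_add Rats_of_int Rats_of_nat)
  moreover have "(Tm N y + of_int \<lfloor>real N * y\<rfloor>) / real N = y" using assms by (simp add: Tm_def)
  ultimately show False using assms by simp
qed

lemma Grat:
  assumes Grec: "\<And>y. 0 \<le> y \<Longrightarrow> y < 1 \<Longrightarrow> G y = (real (card {d\<in>D. d < dg N y}) +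
                 (if dg N y \<in> D then G (Tm N y) else 0)) / real (card D)"
  shows "0 \<le> y \<Longrightarrow> y < 1 \<Longrightarrow> dg N ((Tm N ^^ k) y) \<notin> D \<Longrightarrow> G y \<in> \<rat>"
proof (induction k arbitrary: y)
  case 0
  then have "dg N y \<notin> D" by simp
  then have "G y = real (card {d\<in>D. d < dg N y}) / real (card D)"
    using Grec[OF 0(1,2)] by simp
  then show ?case by (simp add: Rats_divide)
next
  case (Suc k)
  show ?case
  proof (cases "dg N y \<in> D")
    case False
    then have "G y = real (card {d\<in>D. d < dg N y}) / real (card D)"
      using Grec[OF Suc.prems(1,2)] by simp
    then show ?thesis by (simp add: Rats_divide)
  next
    case True
    have "(Tm N ^^ Suc k) y = (Tm N ^^ k) (Tm N y)" by (simp only: funpow_Suc_right o_apply)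
    then have "dg N ((Tm N ^^ k) (Tm N y)) \<notin> D" using Suc.prems(3) by simp
    moreover have "0 \<le> Tm N y" "Tm N y < 1" using Tm_range[of N y] by auto
    ultimately have "G (Tm N y) \<in> \<rat>" using Suc.IH by blast
    moreover have "G y = (real (card {d\<in>D. d < dg N y}) + G (Tm N y)) / real (card D)"
      using Grec[OF Suc.prems(1,2)] True by simp
    ultimately show ?thesis by (simp add: Rats_divide Rats_add)
  qed
qed

lemma card_less_inj:
  fixes D :: "nat set"
  assumes "finite D" "a \<in> D" "b \<in> D" "a < b"
  shows "card {d\<in>D. d < a} < card {d\<in>D. d < b}"
proof (rule psubset_card_mono)
  show "finite {d\<in>D. d < b}" using assms by simp
  have "{d\<in>D. d < a} \<subseteq> {d\<in>D. d < b}" using assms(4) by auto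
  moreover have "a \<in> {d\<in>D. d < b}" "a \<notin> {d\<in>D. d < a}" using assms by auto
  ultimately show "{d\<in>D. d < a} \<subset> {d\<in>D. d < b}" by blast
qed

lemma Girr:
  assumes N: "N \<ge> 2" and x: "0 \<le> x" "x \<le> 1" "x \<notin> \<rat>"
    and digD: "\<And>k. dg N ((Tm N ^^ k) x) \<in> D" and fin: "finite D"
    and G01: "\<And>y. 0 \<le> G y \<and> G y \<le> 1"
    and Grec: "\<And>y. 0 \<le> y \<Longrightarrow> y < 1 \<Longrightarrow> G y = (real (card {d\<in>D. d < dg N y}) +
                 (if dg N y \<in> D then G (Tm N y) else 0)) / real (card D)"
  shows "G x \<notin> \<rat>"
proof
  assume Gq: "G x \<in> \<rat>"
  define xs where "xs k = (Tm N ^^ k) x" for k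
  define m where "m = card D"
  define c where "c a = card {d\<in>D. d < a}" for a
  define r where "r k = G (xs k)" for k
  define e where "e k = c (dg N (xs k))" for k
  have x1: "x \<noteq> 1" using x by auto
  have xsr: "0 \<le> xs k \<and> xs k < 1" for k
  proof (cases k)
    case 0 then show ?thesis using x x1 by (simp add: xs_def)
  next
    case (Suc n)
    have "xs k = Tm N (xs n)" using Suc by (simp add: xs_def)
    then show ?thesis using Tm_range by simp
  qed
  have mpos: "m > 0" unfolding m_def using digD[of 0] fin by (auto simp: card_gt_0_iff)
  have rec: "r k = (real (e k) + r (Suc k)) / real m" for k
    using Grec[of "xs k"] xsr[of k] digD[of k]
    by (simp add: r_def e_def c_def m_def xs_def)
  have rec2: "r (Suc k) = real m * r k - real (e k)" for k
    using rec[of k] mpos by (simp add: field_simps)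
  have rb: "0 \<le> r k \<and> r k \<le> 1" for k unfolding r_def using G01 by simp
  have elt: "e k < m" for k
  proof -
    have "{d\<in>D. d < dg N (xs k)} \<subset> D" using digD[of k] by (auto simp: xs_def)
    then show ?thesis unfolding e_def c_def m_def using fin by (intro psubset_card_mono)
  qed
  have cinj: "a = b" if "a \<in> D" "b \<in> D" "c a = c b" for a b
  proof (rule ccontr)
    assume "a \<noteq> b"
    then consider "a < b" | "b < a" by linarith
    then show False
    proof cases
      case 1 then show False using card_less_inj[OF fin that(1,2)] that(3) unfolding c_def by simp
    next
      case 2 then show False using card_less_inj[OF fin that(2,1)] that(3) unfolding c_def by simp
    qed
  qed
  have dig_eq: "dg N (xs k) = dg N (xs l)" if "e k = e l" for k l
  proof -
    have "dg N (xs k) \<in> D" "dg N (xs l) \<in> D" using digD unfolding xs_def by auto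
    moreover have "c (dg N (xs k)) = c (dg N (xs l))" using that unfolding e_def .
    ultimately show ?thesis by (rule cinj)
  qed
  have contra: False if "j < k" "\<And>i. e (j + i) = e (k + i)" for j k
  proof -
    have "x \<in> \<rat>"
    proof (rule same_digits_rat[OF N x(1,2) that(1)])
      fix i show "dg N ((Tm N ^^ (j + i)) x) = dg N ((Tm N ^^ (k + i)) x)"
        using dig_eq[OF that(2)[of i]] unfolding xs_def .
    qed
    then show False using x by simp
  qed
  have "r 0 \<in> \<rat>" using Gq by (simp add: r_def xs_def)
  then obtain p q where pq: "q > 0" "r 0 = of_int p / of_int q"
    by (rule Rats_cases') blast
  have qint: "\<exists>z::int. of_int q * r k = of_int z" for k
  proof (induction k)
    case 0 then show ?case using pq by (intro exI[of _ p]) simp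
  next
    case (Suc k)
    then obtain z where z: "of_int q * r k = of_int z" by blast
    have "of_int q * r (Suc k) = real m * (of_int q * r k) - of_int q * real (e k)"
      by (simp add: rec2 algebra_simps)
    also have "\<dots> = of_int (int m * z - q * int (e k))" using z by simp
    finally show ?case by blast
  qed
  show False
  proof (cases "\<exists>k0. r k0 = 1")
    case True
    then obtain k0 where k0: "r k0 = 1" by blast
    have ones: "r (k0 + i) = 1 \<and> e (k0 + i) = m - 1" for i
    proof (induction i)
      case 0
      have "real (e k0) + r (Suc k0) = real m" using rec[of k0] k0 mpos by (simp add: field_simps)
      then have "real (e k0) + 1 \<ge> real m" using rb[of "Suc k0"] by linarith
      then show ?case using elt[of k0] k0 by simp
    next
      case (Suc i)
      have "real (e (k0+i)) + r (Suc (k0+i)) = real m" using rec[of "k0+i"] Suc mpos by (simp add: field_simps)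
      then have a: "real (e (k0+i)) + 1 \<ge> real m" "r (Suc (k0+i)) = real m - real (e (k0+i))"
        using rb[of "Suc (k0+i)"] by linarith+
      then have "e (k0+i) = m - 1" using elt[of "k0+i"] by linarith
      then have r1: "r (k0 + Suc i) = 1" using a mpos by simp
      have "real (e (k0 + Suc i)) + r (Suc (k0 + Suc i)) = real m"
        using rec[of "k0 + Suc i"] r1 mpos by (simp add: field_simps)
      then have "real (e (k0 + Suc i)) + 1 \<ge> real m" using rb[of "Suc (k0 + Suc i)"] by linarith
      then show ?case using elt[of "k0 + Suc i"] r1 by simp
    qed
    show False
      by (rule contra[of k0 "Suc k0"]) (use ones[of "Suc _"] ones in \<open>simp_all\<close>)
  next
    case False
    have rl: "r k < 1" for k
    proof -
      have "r k \<noteq> 1" using False by blast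
      then show ?thesis using rb[of k] by linarith
    qed
    have efl: "int (e k) = \<lfloor>real m * r k\<rfloor>" for k
    proof -
      have "real m * r k = real (e k) + r (Suc k)" using rec2[of k] by simp
      then show ?thesis using rb[of "Suc k"] rl[of "Suc k"] by (intro floor_unique[symmetric]) auto
    qed
    have rf: "r (Suc k) = real m * r k - of_int \<lfloor>real m * r k\<rfloor>" for k
    proof -
      have "real (e k) = of_int (int (e k))" by simp
      also have "\<dots> = of_int \<lfloor>real m * r k\<rfloor>" by (simp only: efl)
      finally show ?thesis using rec2[of k] by simp
    qed
    define g where "g k = \<lfloor>of_int q * r k\<rfloor>" for k
    have gq: "of_int (g k) = of_int q * r k" for k
      using qint[of k] unfolding g_def by auto
    have gA: "g ` {0..nat q} \<subseteq> {0..<q}"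
    proof
      fix y assume "y \<in> g ` {0..nat q}"
      then obtain k where y: "y = g k" by blast
      have "0 \<le> of_int q * r k" using rb[of k] pq by simp
      moreover have "of_int q * r k < of_int q" using rl[of k] pq by simp
      ultimately show "y \<in> {0..<q}" using gq[of k] y by (simp del: of_int_less_iff add: of_int_less_iff[symmetric])
    qed
    have "card (g ` {0..nat q}) \<le> card {0..<q}" by (rule card_mono[OF _ gA]) simp
    also have "\<dots> < card {0..nat q}" using pq by simp
    finally have "\<not> inj_on g {0..nat q}" by (rule pigeonhole)
    then obtain j k where jk: "j \<noteq> k" "g j = g k" unfolding inj_on_def by blast
    then have rjk: "r j = r k" using gq[of j] gq[of k] pq by simp
    have per: "r (a + i) = r (b + i)" if "r a = r b" for a b i
      using that by (induction i) (simp_all add: rf)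
    have eper: "e (a + i) = e (b + i)" if "r a = r b" for a b i
      using efl[of "a+i"] efl[of "b+i"] per[OF that, of i] by simp
    show False
    proof (cases "j < k")
      case True then show False using contra[of j k] eper[OF rjk] by blast
    next
      case False then have "k < j" using jk by simp
      then show False using contra[of k j] eper[OF rjk[symmetric]] by blast
    qed
  qed
qed

lemma H_zero:
  fixes H :: "real \<Rightarrow> real" and D :: "nat set"
  assumes N: "N \<ge> 2" and fin: "finite D" and ab: "a \<in> D" "b \<in> D" "a < b"
    and Hrec: "\<And>y. H y = (\<Sum>d\<in>D. H (real N * y - real d)) / real (card D)"
    and Hb: "\<And>y. \<bar>H y\<bar> \<le> 1"
    and top: "(H \<longlongrightarrow> 0) at_top" and bot: "(H \<longlongrightarrow> 0) at_bot"
  shows "H y0 = 0"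
proof (rule ccontr)
  assume ne: "H y0 \<noteq> 0"
  define s where "s = (SUP y. \<bar>H y\<bar>)"
  have bdd: "bdd_above (range (\<lambda>y. \<bar>H y\<bar>))" using Hb by (intro bdd_aboveI) auto
  have Hs: "\<bar>H y\<bar> \<le> s" for y unfolding s_def by (rule cSUP_upper[OF UNIV_I bdd])
  have spos: "s > 0" using Hs[of y0] ne by linarith
  define m where "m = card D"
  have mpos: "m > 0" using fin ab unfolding m_def by (auto simp: card_gt_0_iff)
  define W where "W n y \<longleftrightarrow> \<bar>H y\<bar> > s - s / (2 * real m ^ n)" for n y
  have Wstep: "W n (real N * y - real d)" if "W (Suc n) y" "d \<in> D" for n y d
  proof -
    have "real m * H y = (\<Sum>e\<in>D. H (real N * y - real e))"
      using Hrec[of y] mpos by (simp add: m_def field_simps)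
    then have "\<bar>real m * H y\<bar> = \<bar>\<Sum>e\<in>D. H (real N * y - real e)\<bar>" by simp
    then have "real m * \<bar>H y\<bar> = \<bar>\<Sum>e\<in>D. H (real N * y - real e)\<bar>" by (simp add: abs_mult)
    also have "\<dots> \<le> (\<Sum>e\<in>D. \<bar>H (real N * y - real e)\<bar>)" by (rule sum_abs)
    also have "\<dots> = \<bar>H (real N * y - real d)\<bar> + (\<Sum>e\<in>D - {d}. \<bar>H (real N * y - real e)\<bar>)"
      using fin that(2) by (simp add: sum.remove)
    also have "(\<Sum>e\<in>D - {d}. \<bar>H (real N * y - real e)\<bar>) \<le> (\<Sum>e\<in>D - {d}. s)"
      by (intro sum_mono Hs)
    also have "(\<Sum>e\<in>D - {d}. s) = (real m - 1) * s" using fin that(2) mpos by (simp add: m_def of_nat_diff)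
    finally have A: "real m * \<bar>H y\<bar> \<le> \<bar>H (real N * y - real d)\<bar> + (real m - 1) * s" by simp
    have "real m * \<bar>H y\<bar> > real m * (s - s / (2 * real m ^ Suc n))"
      using that(1) mpos unfolding W_def by (intro mult_strict_left_mono) auto
    also have "real m * (s - s / (2 * real m ^ Suc n)) = real m * s - s / (2 * real m ^ n)"
      using mpos by (simp add: field_simps)
    finally show ?thesis using A unfolding W_def by (simp add: algebra_simps)
  qed
  have spread: "\<And>n y1 y2 L. W (n + k) y1 \<Longrightarrow> W (n + k) y2 \<Longrightarrow> \<bar>y1 - y2\<bar> \<ge> L \<Longrightarrow>
      \<exists>z1 z2. W n z1 \<and> W n z2 \<and> \<bar>z1 - z2\<bar> \<ge> real N ^ k * L" for k
  proof (induction k)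
    case 0 then show ?case by auto
  next
    case (Suc k)
    have w1: "W (n + k) (real N * y1 - real a)" using Wstep[of "n+k" y1 a] Suc.prems ab by simp
    have w2: "W (n + k) (real N * y2 - real a)" using Wstep[of "n+k" y2 a] Suc.prems ab by simp
    have "\<bar>(real N * y1 - real a) - (real N * y2 - real a)\<bar> = real N * \<bar>y1 - y2\<bar>"
    proof -
      have "(real N * y1 - real a) - (real N * y2 - real a) = real N * (y1 - y2)" by (simp add: algebra_simps)
      then show ?thesis by (simp add: abs_mult)
    qed
    also have "\<dots> \<ge> real N * L" using Suc.prems(3) N by (intro mult_left_mono) auto
    finally obtain z1 z2 where "W n z1" "W n z2" "\<bar>z1 - z2\<bar> \<ge> real N ^ k * (real N * L)"
      using Suc.IH[OF w1 w2] by blast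
    then show ?case by (intro exI[of _ z1] exI[of _ z2]) (simp add: algebra_simps)
  qed
  have h: "s / 2 > 0" using spos by simp
  have ev1: "eventually (\<lambda>y. \<bar>H y\<bar> < s / 2) at_top"
    using tendstoD[OF top h] by (simp add: dist_real_def)
  have ev2: "eventually (\<lambda>y. \<bar>H y\<bar> < s / 2) at_bot"
    using tendstoD[OF bot h] by (simp add: dist_real_def)
  obtain R1 where R1: "\<And>y. y \<ge> R1 \<Longrightarrow> \<bar>H y\<bar> < s / 2" using ev1 by (auto simp: eventually_at_top_linorder)
  obtain R2 where R2: "\<And>y. y \<le> R2 \<Longrightarrow> \<bar>H y\<bar> < s / 2" using ev2 by (auto simp: eventually_at_bot_linorder)
  define R where "R = max \<bar>R1\<bar> \<bar>R2\<bar>"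
  have W0: "\<bar>y\<bar> \<le> R" if "W 0 y" for y
  proof (rule ccontr)
    assume "\<not> \<bar>y\<bar> \<le> R"
    then have "y \<ge> R1 \<or> y \<le> R2" unfolding R_def by linarith
    then have "\<bar>H y\<bar> < s / 2" using R1 R2 by blast
    then show False using that unfolding W_def by simp
  qed
  obtain k where k: "2 * R < real N ^ k" using real_arch_pow[of "real N" "2 * R"] N by auto
  have "s - s / (2 * real m ^ Suc k) < s" using spos mpos by simp
  then obtain y where y: "W (Suc k) y" unfolding W_def s_def using less_cSUP_iff[OF _ bdd] by auto
  have w1: "W (0 + k) (real N * y - real a)" using Wstep[OF y ab(1)] by simp
  have w2: "W (0 + k) (real N * y - real b)" using Wstep[OF y ab(2)] by simp
  have "\<bar>(real N * y - real a) - (real N * y - real b)\<bar> \<ge> 1" using ab by simp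
  then obtain z1 z2 where z: "W 0 z1" "W 0 z2" "\<bar>z1 - z2\<bar> \<ge> real N ^ k * 1"
    using spread[OF w1 w2] by blast
  then show False using W0[OF z(1)] W0[OF z(2)] k by linarith
qed

definition Pm :: "nat \<Rightarrow> nat set \<Rightarrow> real measure \<Rightarrow> bool" where
  "Pm N D \<mu> \<longleftrightarrow> prob_space \<mu> \<and> sets \<mu> = sets borel \<and>
     (\<forall>A\<in>sets borel. measure \<mu> A = (\<Sum>d\<in>D. measure \<mu> (cantor_map N d -` A)) / real (card D))"

lemma vimage_atMost: "N \<ge> 1 \<Longrightarrow> cantor_map N d -` {..y} = {..real N * y - real d}"
proof (rule set_eqI)
  fix z assume N: "N \<ge> 1"
  have "z \<in> cantor_map N d -` {..y} \<longleftrightarrow> (z + real d) / real N \<le> y" by (simp add: cantor_map_def)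
  also have "\<dots> \<longleftrightarrow> z + real d \<le> y * real N" using N by (simp add: pos_divide_le_eq)
  also have "\<dots> \<longleftrightarrow> z \<in> {..real N * y - real d}" by (simp add: algebra_simps)
  finally show "z \<in> cantor_map N d -` {..y} \<longleftrightarrow> z \<in> {..real N * y - real d}" .
qed

lemma cdf_rec:
  assumes "Pm N D \<mu>" "N \<ge> 1"
  shows "measure \<mu> {..y} = (\<Sum>d\<in>D. measure \<mu> {..real N * y - real d}) / real (card D)"
proof -
  have "measure \<mu> {..y} = (\<Sum>d\<in>D. measure \<mu> (cantor_map N d -` {..y})) / real (card D)"
    using assms(1) unfolding Pm_def by auto
  then show ?thesis using vimage_atMost[OF assms(2)] by simp
qed

lemma two_elems: assumes "2 \<le> card (D::nat set)" shows "\<exists>a b. a \<in> D \<and> b \<in> D \<and> a < b"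
proof -
  have fin: "finite D" using assms card.infinite by fastforce
  have "D \<noteq> {}" using assms by auto
  then obtain x where x: "x \<in> D" by blast
  have "card (D - {x}) \<ge> 1" using assms x fin by (simp add: card_Diff_singleton)
  then have "D - {x} \<noteq> {}" by (intro notI) simp
  then obtain y where y: "y \<in> D" "y \<noteq> x" by blast
  show ?thesis
  proof (cases "x < y")
    case True then show ?thesis using x y by blast
  next
    case False then have "y < x" using y by simp
    then show ?thesis using x y by blast
  qed
qed

lemma real_distI: "Pm N D \<mu> \<Longrightarrow> real_distribution \<mu>"
  unfolding Pm_def real_distribution_def real_distribution_axioms_def by auto

lemma mu0_Pm: assumes "N \<ge> 2" "D \<subseteq> {..<N}" "D \<noteq> {}" shows "Pm N D (mu0 N D)"
proof -
  have fin: "finite D" using assms finite_subset by blast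
  show ?thesis unfolding Pm_def using mu0_prob[OF fin assms(3)] mu0_sets mu0_eq[OF assms] by blast
qed

lemma mu_unique:
  assumes N: "N \<ge> 2" and D: "D \<subseteq> {..<N}" "2 \<le> card D" and P: "Pm N D \<mu>"
  shows "\<mu> = mu0 N D"
proof -
  have fin: "finite D" using D finite_subset by blast
  have Dne: "D \<noteq> {}" using D by auto
  have P0: "Pm N D (mu0 N D)" by (rule mu0_Pm[OF N D(1) Dne])
  interpret R1: real_distribution \<mu> by (rule real_distI[OF P])
  interpret R2: real_distribution "mu0 N D" by (rule real_distI[OF P0])
  obtain a b where ab: "a \<in> D" "b \<in> D" "a < b" using two_elems[OF D(2)] by blast
  define H where "H y = cdf \<mu> y - cdf (mu0 N D) y" for y
  have "H y0 = 0" for y0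
  proof (rule H_zero[where H=H, OF N fin ab])
    fix y
    have N1: "N \<ge> 1" using N by simp
    show "H y = (\<Sum>d\<in>D. H (real N * y - real d)) / real (card D)"
    proof -
      have e1: "cdf \<mu> y = (\<Sum>d\<in>D. cdf \<mu> (real N * y - real d)) / real (card D)"
        unfolding cdf_def by (rule cdf_rec[OF P N1])
      have e2: "cdf (mu0 N D) y = (\<Sum>d\<in>D. cdf (mu0 N D) (real N * y - real d)) / real (card D)"
        unfolding cdf_def by (rule cdf_rec[OF P0 N1])
      have "H y = (\<Sum>d\<in>D. cdf \<mu> (real N * y - real d)) / real (card D)
               - (\<Sum>d\<in>D. cdf (mu0 N D) (real N * y - real d)) / real (card D)"
        unfolding H_def by (subst e1, subst e2) (rule refl)
      also have "\<dots> = (\<Sum>d\<in>D. H (real N * y - real d)) / real (card D)"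
        unfolding H_def by (simp add: sum_subtractf diff_divide_distrib)
      finally show ?thesis .
    qed
    have "0 \<le> cdf \<mu> y" "cdf \<mu> y \<le> 1" "0 \<le> cdf (mu0 N D) y" "cdf (mu0 N D) y \<le> 1"
      using R1.cdf_bounded_prob R2.cdf_bounded_prob by (auto simp: cdf_def)
    then show "\<bar>H y\<bar> \<le> 1" unfolding H_def by linarith
  next
    show "(H \<longlongrightarrow> 0) at_top"
      using tendsto_diff[OF R1.cdf_lim_at_top_prob R2.cdf_lim_at_top_prob] unfolding H_def[abs_def] by simp
    show "(H \<longlongrightarrow> 0) at_bot"
      using tendsto_diff[OF R1.cdf_lim_at_bot R2.cdf_lim_at_bot] unfolding H_def[abs_def] by simp
  qed
  then have "cdf \<mu> = cdf (mu0 N D)" unfolding H_def by (auto simp: fun_eq_iff)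
  then show ?thesis by (rule cdf_unique[OF real_distI[OF P] real_distI[OF P0]])
qed

lemma cantor_measure_eq:
  assumes N: "N \<ge> 2" and D: "D \<subseteq> {..<N}" "2 \<le> card D"
  shows "cantor_measure N D = mu0 N D"
proof -
  have Dne: "D \<noteq> {}" using D by auto
  have "(THE \<mu>. Pm N D \<mu>) = mu0 N D"
  proof (rule the_equality)
    show "Pm N D (mu0 N D)" by (rule mu0_Pm[OF N D(1) Dne])
  next
    fix \<mu> assume "Pm N D \<mu>" then show "\<mu> = mu0 N D" by (rule mu_unique[OF N D])
  qed
  then show ?thesis unfolding cantor_measure_def Pm_def .
qed

lemma cdf_is_mu0:
  assumes N: "N \<ge> 2" and D: "D \<subseteq> {..<N}" "2 \<le> card D"
  shows "cantor_cdf N D y = measure (mu0 N D) {..y}"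
proof -
  have "Xf N -` {0..y} \<inter> space (Sp D) = Xf N -` {..y} \<inter> space (Sp D)"
    using Xf_range[OF N] by auto
  then show ?thesis
    unfolding cantor_cdf_def cantor_measure_eq[OF assms] mu0_def
    by (subst (1 2) measure_distr) (auto simp: Sp_def)
qed

lemma mu0_ge1:
  assumes N: "N \<ge> 2" and D: "D \<subseteq> {..<N}" "D \<noteq> {}" and y: "y \<ge> 1"
  shows "measure (mu0 N D) {..y} = 1"
proof -
  have fin: "finite D" using D finite_subset by blast
  interpret S: prob_space "Sp D" by (rule prob_Sp[OF fin D(2)])
  have "Xf N \<omega> \<in> {..y}" for \<omega> using Xf_range[OF N, of \<omega>] y by auto
  then have "Xf N -` {..y} \<inter> space (Sp D) = space (Sp D)" by blast
  then show ?thesis unfolding mu0_def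
    by (subst measure_distr) (auto simp: Sp_def S.prob_space[unfolded Sp_def])
qed

lemma mu0_neg:
  assumes N: "N \<ge> 2" and y: "y < 0"
  shows "measure (mu0 N D) {..y} = 0"
proof -
  have "Xf N \<omega> \<notin> {..y}" for \<omega> using Xf_range[OF N, of \<omega>] y by auto
  then have "Xf N -` {..y} \<inter> space (Sp D) = {}" by blast
  then show ?thesis unfolding mu0_def
    by (subst measure_distr) (auto simp: Sp_def)
qed

lemma G01:
  assumes N: "N \<ge> 2" and D: "D \<subseteq> {..<N}" "2 \<le> card D"
  shows "0 \<le> cantor_cdf N D y \<and> cantor_cdf N D y \<le> 1"
proof -
  have fin: "finite D" using D finite_subset by blast
  have Dne: "D \<noteq> {}" using D by auto
  interpret M: prob_space "mu0 N D" by (rule mu0_prob[OF fin Dne])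
  show ?thesis unfolding cdf_is_mu0[OF assms] by simp
qed

lemma Grec:
  assumes N: "N \<ge> 2" and D: "D \<subseteq> {..<N}" "2 \<le> card D" and y: "0 \<le> y" "y < 1"
  shows "cantor_cdf N D y = (real (card {d\<in>D. d < dg N y}) +
                 (if dg N y \<in> D then cantor_cdf N D (Tm N y) else 0)) / real (card D)"
proof -
  have fin: "finite D" using D finite_subset by blast
  have Dne: "D \<noteq> {}" using D by auto
  define G where "G z = measure (mu0 N D) {..z}" for z
  define a where "a = dg N y"
  have fl: "0 \<le> \<lfloor>real N * y\<rfloor>" using y by simp
  have ra: "real a = of_int \<lfloor>real N * y\<rfloor>" unfolding a_def dg_def using fl by simp
  have a1: "real a \<le> real N * y" "real N * y < real a + 1" unfolding ra by linarith+
  have Tm: "Tm N y = real N * y - real a" using Tm_dg[OF y(1)] unfolding a_def .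
  have each: "G (real N * y - real d) = (if d < a then 1 else 0) + (if d = a then G (Tm N y) else 0)"
    if "d \<in> D" for d
  proof -
    consider "d < a" | "d = a" | "d > a" by linarith
    then show ?thesis
    proof cases
      case 1
      then have "real d + 1 \<le> real a" by linarith
      then have "real N * y - real d \<ge> 1" using a1 by linarith
      then show ?thesis using 1 mu0_ge1[OF N D(1) Dne] unfolding G_def by simp
    next
      case 2 then show ?thesis using Tm by simp
    next
      case 3
      then have "real a + 1 \<le> real d" by linarith
      then have "real N * y - real d < 0" using a1 by linarith
      then show ?thesis using 3 mu0_neg[OF N] unfolding G_def by simp
    qed
  qed
  have "G y = (\<Sum>d\<in>D. G (real N * y - real d)) / real (card D)"
    unfolding G_def by (rule cdf_rec[OF mu0_Pm[OF N D(1) Dne]]) (use N in simp)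
  also have "(\<Sum>d\<in>D. G (real N * y - real d)) =
      (\<Sum>d\<in>D. (if d < a then 1 else 0) + (if d = a then G (Tm N y) else 0))"
    by (rule sum.cong[OF refl]) (rule each)
  also have "\<dots> = (\<Sum>d\<in>D. (if d < a then 1 else 0)) + (\<Sum>d\<in>D. (if d = a then G (Tm N y) else 0))"
    by (rule sum.distrib)
  also have "(\<Sum>d\<in>D. (if d < a then 1 else (0::real))) = real (card {d\<in>D. d < a})"
  proof -
    have "real (card {d\<in>D. d < a}) = (\<Sum>d\<in>{d\<in>D. d < a}. 1)" by simp
    also have "\<dots> = (\<Sum>d\<in>D. (if d < a then 1 else (0::real)))" by (rule sum.inter_filter[OF fin])
    finally show ?thesis by simp
  qed
  also have "(\<Sum>d\<in>D. (if d = a then G (Tm N y) else 0)) = (if a \<in> D then G (Tm N y) else 0)"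
    using fin by (simp add: sum.delta)
  finally have "G y = (real (card {d\<in>D. d < a}) + (if a \<in> D then G (Tm N y) else 0)) / real (card D)" .
  moreover have "cantor_cdf N D = G" unfolding G_def by (rule ext) (rule cdf_is_mu0[OF assms(1-3)])
  ultimately show ?thesis unfolding a_def by simp
qed

lemma orbit_step:
  assumes N: "N \<ge> 2" and S: "S \<subseteq> {..<N}" "S \<noteq> {}" and y: "y \<in> cantor_set N S" "y \<notin> \<rat>"
  shows "dg N y \<in> S \<and> Tm N y \<in> cantor_set N S \<and> Tm N y \<notin> \<rat> \<and> 0 \<le> y \<and> y \<le> 1"
proof -
  obtain d z where dz: "d \<in> S" "z \<in> cantor_set N S" "y = (z + real d) / real N" and y01: "0 \<le> y" "y \<le> 1"
    using cantor_set_step[OF N S y(1)] by blast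
  have z01: "0 \<le> z" "z \<le> 1" using cantor_set_step[OF N S dz(2)] by auto
  have Nz: "real N * y = z + real d" using dz(3) N by simp
  have zq: "z \<notin> \<rat>"
  proof
    assume "z \<in> \<rat>"
    then have "(z + real d) / real N \<in> \<rat>" by (intro Rats_divide Rats_add Rats_of_nat)
    then show False using y(2) dz(3) by simp
  qed
  have "z \<noteq> 1" using zq by auto
  then have z1: "z < 1" using z01 by simp
  have fl: "\<lfloor>real N * y\<rfloor> = int d" unfolding Nz floor_eq_iff using z01 z1 by simp
  have T1: "Tm N y = real N * y - real d" unfolding Tm_def fl by simp
  have "dg N y = d" unfolding dg_def fl by simp
  moreover have "Tm N y = z" using T1 Nz by simp
  ultimately show ?thesis using dz zq y01 by simp
qed

lemma orbit:
  assumes N: "N \<ge> 2" and S: "S \<subseteq> {..<N}" "S \<noteq> {}" and x: "x \<in> cantor_set N S" "x \<notin> \<rat>"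
  shows "(Tm N ^^ k) x \<in> cantor_set N S \<and> (Tm N ^^ k) x \<notin> \<rat> \<and> dg N ((Tm N ^^ k) x) \<in> S"
proof (induction k)
  case 0
  have "dg N x \<in> S" using orbit_step[OF N S x] by blast
  then show ?case using assms(4,5) by simp
next
  case (Suc k)
  then have a: "(Tm N ^^ k) x \<in> cantor_set N S" "(Tm N ^^ k) x \<notin> \<rat>" by auto
  have "(Tm N ^^ Suc k) x = Tm N ((Tm N ^^ k) x)" by simp
  then show ?case using orbit_step[OF N S a] orbit_step[OF N S, of "Tm N ((Tm N ^^ k) x)"] by simp
qed

lemma pair_lemma:
  assumes N: "N \<ge> 2" and D: "D \<subseteq> {..<N}" "2 \<le> card D"
    and S: "S \<subseteq> {..<N}" "card S = 2" and x: "x \<in> cantor_set N S" "x \<notin> \<rat>"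
  shows "cantor_cdf N D x \<notin> \<rat> \<longleftrightarrow> S \<subseteq> D"
proof -
  have Sne: "S \<noteq> {}" using S by auto
  have finD: "finite D" using D finite_subset by blast
  have x01: "0 \<le> x" "x \<le> 1" using orbit_step[OF N S(1) Sne x] by auto
  have "x \<noteq> 1" using x(2) Rats_1 by metis
  then have x1: "x < 1" using x01 by linarith
  have orb: "(Tm N ^^ k) x \<in> cantor_set N S \<and> (Tm N ^^ k) x \<notin> \<rat> \<and> dg N ((Tm N ^^ k) x) \<in> S" for k
    by (rule orbit[OF N S(1) Sne x])
  show ?thesis
  proof
    assume nq: "cantor_cdf N D x \<notin> \<rat>"
    show "S \<subseteq> D"
    proof (rule ccontr)
      assume "\<not> S \<subseteq> D"
      then obtain a where a: "a \<in> S" "a \<notin> D" by blast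
      have "\<exists>p q. S = {p, q} \<and> p \<noteq> q" using S(2) by (simp only: card_2_iff)
      then obtain p q where pq: "S = {p, q}" "p \<noteq> q" by blast
      define b where "b = (if a = p then q else p)"
      have b: "S = {a, b}"
      proof (cases "a = p")
        case True then show ?thesis using pq unfolding b_def by simp
      next
        case False then have "a = q" using a(1) pq by blast
        then show ?thesis using pq False unfolding b_def by (simp add: insert_commute)
      qed
      have "\<exists>k. dg N ((Tm N ^^ k) x) = a"
      proof (rule ccontr)
        assume "\<not> (\<exists>k. dg N ((Tm N ^^ k) x) = a)"
        then have na: "dg N ((Tm N ^^ k) x) \<noteq> a" for k by blast
        have allb: "dg N ((Tm N ^^ k) x) = b" for k
        proof -
          have "dg N ((Tm N ^^ k) x) \<in> {a, b}" using orb[of k] b by simp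
          then show ?thesis using na[of k] by simp
        qed
        have "x \<in> \<rat>"
          by (rule same_digits_rat[OF N x01 zero_less_one]) (simp only: allb)
        then show False using x by simp
      qed
      then obtain k where "dg N ((Tm N ^^ k) x) = a" by blast
      then have "dg N ((Tm N ^^ k) x) \<notin> D" using a by simp
      then have "cantor_cdf N D x \<in> \<rat>"
        by (intro Grat[of "cantor_cdf N D" D N, OF Grec[OF N D] x01(1) x1])
      then show False using nq by simp
    qed
  next
    assume SD: "S \<subseteq> D"
    show "cantor_cdf N D x \<notin> \<rat>"
    proof (rule Girr[OF N x01 x(2) _ finD])
      show "\<And>k. dg N ((Tm N ^^ k) x) \<in> D" using orb SD by blast
      show "\<And>y. 0 \<le> cantor_cdf N D y \<and> cantor_cdf N D y \<le> 1" by (rule G01[OF N D])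
      show "\<And>y. 0 \<le> y \<Longrightarrow> y < 1 \<Longrightarrow> cantor_cdf N D y = (real (card {d\<in>D. d < dg N y}) +
                 (if dg N y \<in> D then cantor_cdf N D (Tm N y) else 0)) / real (card D)"
        by (rule Grec[OF N D])
    qed
  qed
qed

lemma union_eq:
  assumes N: "N \<ge> 3" and D: "D \<subseteq> {..<N}" "2 \<le> card D"
    and xS: "\<And>S. S \<subseteq> {..<N} \<Longrightarrow> card S = 2 \<Longrightarrow> x S \<in> cantor_set N S \<and> x S \<notin> \<rat>"
  shows "D = \<Union>{S. S \<subseteq> {..<N} \<and> card S = 2 \<and> cantor_cdf N D (x S) \<notin> \<rat>}"
proof -
  have N2: "N \<ge> 2" using N by simp
  have "{S. S \<subseteq> {..<N} \<and> card S = 2 \<and> cantor_cdf N D (x S) \<notin> \<rat>} = {S. S \<subseteq> {..<N} \<and> card S = 2 \<and> S \<subseteq> D}"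
  proof (rule Collect_cong)
    fix S
    show "(S \<subseteq> {..<N} \<and> card S = 2 \<and> cantor_cdf N D (x S) \<notin> \<rat>) \<longleftrightarrow> (S \<subseteq> {..<N} \<and> card S = 2 \<and> S \<subseteq> D)"
    proof (cases "S \<subseteq> {..<N} \<and> card S = 2")
      case True
      then have "x S \<in> cantor_set N S" "x S \<notin> \<rat>" using xS by auto
      then have "cantor_cdf N D (x S) \<notin> \<rat> \<longleftrightarrow> S \<subseteq> D" using True pair_lemma[OF N2 D] by blast
      then show ?thesis using True by simp
    next
      case False then show ?thesis by auto
    qed
  qed
  also have "\<Union>\<dots> = D"
  proof
    show "\<Union>{S. S \<subseteq> {..<N} \<and> card S = 2 \<and> S \<subseteq> D} \<subseteq> D" by blast
    show "D \<subseteq> \<Union>{S. S \<subseteq> {..<N} \<and> card S = 2 \<and> S \<subseteq> D}"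
    proof
      fix d assume d: "d \<in> D"
      obtain a b where ab: "a \<in> D" "b \<in> D" "a < b" using two_elems[OF D(2)] by blast
      obtain e where e: "e \<in> D" "e \<noteq> d" using ab by (cases "a = d") auto
      have "{d, e} \<subseteq> {..<N}" "card {d, e} = 2" "{d, e} \<subseteq> D" using d e D(1) by auto
      then show "d \<in> \<Union>{S. S \<subseteq> {..<N} \<and> card S = 2 \<and> S \<subseteq> D}" by blast
    qed
  qed
  finally show ?thesis by simp
qed

theorem lemma2p13:
  fixes N :: nat and D :: "nat set" and x :: "nat set \<Rightarrow> real"
  assumes "3 \<le> N" and "D \<subseteq> {..<N}" and "2 \<le> card D" and "card D \<le> N - 1"
    and "\<And>S. S \<subseteq> {..<N} \<Longrightarrow> card S = 2 \<Longrightarrow> x S \<in> cantor_set N S \<and> x S \<notin> \<rat>"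
  shows "D = \<Union>{S. S \<subseteq> {..<N} \<and> card S = 2 \<and> cantor_cdf N D (x S) \<notin> \<rat>}
    \<and> (\<forall>D'. valid_digits N D' \<longrightarrow>
          (\<forall>S. S \<subseteq> {..<N} \<and> card S = 2 \<longrightarrow> cantor_cdf N D' (x S) = cantor_cdf N D (x S))
          \<longrightarrow> D' = D)"
proof
  show D: "D = \<Union>{S. S \<subseteq> {..<N} \<and> card S = 2 \<and> cantor_cdf N D (x S) \<notin> \<rat>}"
    by (rule union_eq[OF assms(1,2,3,5)])
  show "\<forall>D'. valid_digits N D' \<longrightarrow>
          (\<forall>S. S \<subseteq> {..<N} \<and> card S = 2 \<longrightarrow> cantor_cdf N D' (x S) = cantor_cdf N D (x S))
          \<longrightarrow> D' = D"
  proof (intro allI impI)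
    fix D' assume v: "valid_digits N D'"
      and eq: "\<forall>S. S \<subseteq> {..<N} \<and> card S = 2 \<longrightarrow> cantor_cdf N D' (x S) = cantor_cdf N D (x S)"
    have D': "D' \<subseteq> {..<N}" "2 \<le> card D'" using v unfolding valid_digits_def by auto
    have "D' = \<Union>{S. S \<subseteq> {..<N} \<and> card S = 2 \<and> cantor_cdf N D' (x S) \<notin> \<rat>}"
      by (rule union_eq[OF assms(1) D' assms(5)])
    also have "{S. S \<subseteq> {..<N} \<and> card S = 2 \<and> cantor_cdf N D' (x S) \<notin> \<rat>}
             = {S. S \<subseteq> {..<N} \<and> card S = 2 \<and> cantor_cdf N D (x S) \<notin> \<rat>}"
    proof (rule Collect_cong)
      fix S
      show "(S \<subseteq> {..<N} \<and> card S = 2 \<and> cantor_cdf N D' (x S) \<notin> \<rat>) \<longleftrightarrow> (S \<subseteq> {..<N} \<and> card S = 2 \<and> cantor_cdf N D (x S) \<notin> \<rat>)"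
      proof (cases "S \<subseteq> {..<N} \<and> card S = 2")
        case True then show ?thesis using eq by simp
      next
        case False then show ?thesis by auto
      qed
    qed
    finally show "D' = D" using D by simp
  qed
qed

end
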